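(* Let $w$ be a weight on $\mathbb{T}$ with $w>0$ a.e. and $w,w^{-1}\in BMO(\mathbb{T})$, let $n\ge1$ and write $\Phi_n^*=\Phi_n^*(z,w)$. Then for every $j=1,2,\dots$, \[ w^jP_{[1,n]}\Phi_n^*=\sum_{l=1}^{j}\binom{j-1}{l-1}{\bf C}_l\, w^{j-l}\Phi_n^* \] and \[ w^{-j}P_{[1,n]}\Phi_n^*=-\sum_{l=0}^{j}\binom{j}{l}\widetilde{\bf C}_{l+1}\, w^{-(j-l)}(w\Phi_n^* ). \]
   Context: $P_{[i,j]}$ denotes the orthogonal projection in $L^2(\mathbb{T},d\theta)$ onto the span of $e^{ik\theta}$, $i\le k\le j$. A function is identified with the operator of multiplication by it, and $[A,B]=AB-BA$. Define ${\bf C}_0=P_{[1,n]}$, ${\bf C}_l=[w,{\bf C}_{l-1}]$ for $l\ge1$, and $\widetilde{\bf C}_0=P_{[1,n]}$, $\widetilde{\bf C}_l=[w^{-1},\widetilde{\bf C}_{l-1}]$ for $l\ge1$. $\Phi_n(z,w)$ is the monic degree-$n$ polynomial orthogonal in $L^2(w\,d\theta)$ to lower-degree polynomials, and for $Q_n(z)=q_nz^n+\dots+q_0$, $Q_n^*(z)=\bar q_0z^n+\dots+\bar q_n$. *)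

theory Defs
  imports "HOL-Analysis.Analysis" "HOL-Computational_Algebra.Polynomial"
begin

text \<open>Functions on the unit circle T are represented as 2pi-periodic functions
  real => complex (variable theta), with the measure d theta.\<close>

type_synonym cfun = "real \<Rightarrow> complex"

definition fourier_coeff :: "cfun \<Rightarrow> int \<Rightarrow> complex" where
  "fourier_coeff f k = (LINT t:{0..2*pi}|lborel. f t * cis (- (of_int k * t))) / (2 * pi)"

definition proj :: "int \<Rightarrow> int \<Rightarrow> cfun \<Rightarrow> cfun" where
  "proj i j f = (\<lambda>t. \<Sum>k\<in>{i..j}. fourier_coeff f k * cis (of_int k * t))"

definition mult_op :: "cfun \<Rightarrow> cfun \<Rightarrow> cfun" where
  "mult_op g f = (\<lambda>t. g t * f t)"

fun Cop :: "cfun \<Rightarrow> nat \<Rightarrow> nat \<Rightarrow> cfun \<Rightarrow> cfun" where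
  "Cop g 0 n = proj 1 (int n)"
| "Cop g (Suc l) n = (\<lambda>f t. mult_op g (Cop g l n f) t - Cop g l n (mult_op g f) t)"

definition bmo_T :: "(real \<Rightarrow> real) \<Rightarrow> bool" where
  "bmo_T f \<longleftrightarrow> (\<forall>a b. a < b \<longrightarrow> set_integrable lborel {a..b} f) \<and>
     (\<exists>M. \<forall>a b. a < b \<and> b - a \<le> 2 * pi \<longrightarrow>
        (LINT x:{a..b}|lborel. \<bar>f x - (LINT y:{a..b}|lborel. f y) / (b - a)\<bar>) / (b - a) \<le> M)"

definition is_monic_OP :: "(real \<Rightarrow> real) \<Rightarrow> nat \<Rightarrow> complex poly \<Rightarrow> bool" where
  "is_monic_OP w n p \<longleftrightarrow> degree p = n \<and> lead_coeff p = 1 \<and>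
     (\<forall>q :: complex poly. degree q < n \<longrightarrow>
        (LINT t:{0..2*pi}|lborel. poly p (cis t) * cnj (poly q (cis t)) * complex_of_real (w t)) = 0)"

definition rev_star :: "nat \<Rightarrow> complex poly \<Rightarrow> complex poly" where
  "rev_star n p = (\<Sum>k\<le>n. monom (cnj (coeff p (n - k))) k)"

end

theory Submission
  imports Defs
begin


lemma binom_expand:
  fixes x :: "'a::comm_ring_1"
  assumes rec: "\<And>k i. x * F k i = F (Suc k) i + F k (Suc i)"
  shows "x ^ m * F a b = (\<Sum>k\<le>m. of_nat (m choose k) * F (a + k) (b + (m - k)))"
proof (induction m arbitrary: a b)
  case 0 then show ?case by simp
next
  case (Suc m)
  have "x ^ Suc m * F a b = x ^ m * F (Suc a) b + x ^ m * F a (Suc b)"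
    by (simp add: rec algebra_simps flip: mult.assoc)
  also have "\<dots> = (\<Sum>k\<le>m. of_nat (m choose k) * F (a + Suc k) (b + (m - k)))
        + (\<Sum>k\<le>m. of_nat (m choose k) * F (a + k) (b + (Suc m - k)))"
    by (simp add: Suc.IH Suc_diff_le)
  also have "(\<Sum>k\<le>m. of_nat (m choose k) * F (a + Suc k) (b + (m - k)))
      = (\<Sum>k\<le>Suc m. (if k = 0 then 0 else of_nat (m choose (k - 1))) * F (a + k) (b + (Suc m - k)))"
    by (subst sum.atMost_Suc_shift) simp
  also have "(\<Sum>k\<le>m. of_nat (m choose k) * F (a + k) (b + (Suc m - k)))
      = (\<Sum>k\<le>Suc m. of_nat (m choose k) * F (a + k) (b + (Suc m - k)))"
    by (simp add: binomial_eq_0)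
  finally have eq: "x ^ Suc m * F a b = (\<Sum>k\<le>Suc m. ((if k = 0 then 0 else of_nat (m choose (k - 1))) + of_nat (m choose k)) * F (a + k) (b + (Suc m - k)))"
    by (simp only: sum.distrib[symmetric] distrib_right)
  show ?case unfolding eq
  proof (rule sum.cong)
    fix k assume "k \<in> {..Suc m}"
    show "((if k = 0 then 0 else of_nat (m choose (k - 1))) + of_nat (m choose k)) * F (a + k) (b + (Suc m - k)) =
      of_nat (Suc m choose k) * F (a + k) (b + (Suc m - k))"
      by (cases k) auto
  qed simp
qed


lemma rev_star_cis:
  assumes "degree p = n"
  shows "poly (rev_star n p) (cis t) = cis (real n * t) * cnj (poly p (cis t))"
proof -
  have "poly (rev_star n p) (cis t) = (\<Sum>k\<le>n. cnj (coeff p (n - k)) * cis t ^ k)"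
    by (simp add: rev_star_def poly_sum poly_monom)
  also have "\<dots> = (\<Sum>i\<le>n. cnj (coeff p i) * cis t ^ (n - i))"
    by (rule sum.reindex_bij_witness[where i="\<lambda>i. n - i" and j="\<lambda>i. n - i"]) auto
  also have "\<dots> = (\<Sum>i\<le>n. cis (real n * t) * (cnj (coeff p i) * cnj (cis t ^ i)))"
  proof (rule sum.cong)
    fix i assume "i \<in> {..n}"
    then have "cis t ^ (n - i) = cis (real n * t) * cis (- (real i * t))"
      by (subst Complex.DeMoivre) (simp add: cis_mult of_nat_diff algebra_simps)
    then show "cnj (coeff p i) * cis t ^ (n - i) = cis (real n * t) * (cnj (coeff p i) * cnj (cis t ^ i))"
      by (simp add: Complex.DeMoivre cis_cnj)
  qed simp
  also have "\<dots> = cis (real n * t) * cnj (poly p (cis t))"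
    by (simp add: poly_altdef assms sum_distrib_left)
  finally show ?thesis .
qed



lemma orth:
  assumes Phi: "is_monic_OP w n Phi" and k: "1 \<le> k" "k \<le> int n"
  shows "fourier_coeff (\<lambda>t. complex_of_real (w t) * poly (rev_star n Phi) (cis t)) k = 0"
proof -
  define m where "m = nat (int n - k)"
  have deg: "degree Phi = n" using Phi by (simp add: is_monic_OP_def)
  have mn: "m < n" "real m = real n - of_int k" using k by (auto simp: m_def)
  have dq: "degree (monom (1::complex) m) < n" using mn by (simp add: degree_monom_eq)
  have orth0: "(LINT t:{0..2*pi}|lborel. poly Phi (cis t) * cnj (poly (monom 1 m) (cis t)) * complex_of_real (w t)) = 0"
    using Phi dq unfolding is_monic_OP_def by blast
  have pt: "complex_of_real (w t) * poly (rev_star n Phi) (cis t) * cis (- (of_int k * t))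
      = cnj (poly Phi (cis t) * cnj (poly (monom 1 m) (cis t)) * complex_of_real (w t))" for t
  proof -
    have "cis (real n * t) * cis (- (of_int k * t)) = cis t ^ m"
      by (subst Complex.DeMoivre) (simp add: cis_mult mn algebra_simps)
    then show ?thesis
      by (simp add: rev_star_cis[OF deg] poly_monom mult_ac)
  qed
  have "(LINT t:{0..2*pi}|lborel. complex_of_real (w t) * poly (rev_star n Phi) (cis t) * cis (- (of_int k * t)))
     = (LINT t:{0..2*pi}|lborel. cnj (poly Phi (cis t) * cnj (poly (monom 1 m) (cis t)) * complex_of_real (w t)))"
    by (simp only: pt)
  also have "\<dots> = cnj (LINT t:{0..2*pi}|lborel. poly Phi (cis t) * cnj (poly (monom 1 m) (cis t)) * complex_of_real (w t))"
    unfolding set_lebesgue_integral_def Bochner_Integration.integral_cnj[symmetric]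
    by (rule arg_cong[where f="integral\<^sup>L lborel"]) (auto simp: indicator_def fun_eq_iff)
  finally show ?thesis using orth0 by (simp add: fourier_coeff_def)
qed



lemma w_meas:
  assumes "\<forall>a b. a < b \<longrightarrow> set_integrable lborel {a..b} (w::real\<Rightarrow>real)"
  shows "w \<in> borel_measurable lborel"
proof (rule borel_measurable_LIMSEQ_real[where u="\<lambda>i x. indicator {- real i - 1..real i + 1} x * w x"])
  fix x :: real
  have "eventually (\<lambda>i. indicator {- real i - 1..real i + 1} x * w x = w x) sequentially"
    unfolding eventually_sequentially
  proof (intro exI allI impI)
    fix i assume "nat \<lceil>\<bar>x\<bar>\<rceil> \<le> i"
    then have "\<bar>x\<bar> \<le> real i" by linarith
    then show "indicator {- real i - 1..real i + 1} x * w x = w x" by (auto simp: indicator_def)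
  qed
  then show "(\<lambda>i. indicator {- real i - 1..real i + 1} x * w x) \<longlonglongrightarrow> w x"
    by (rule tendsto_eventually)
next
  fix i :: nat
  have "set_integrable lborel {- real i - 1..real i + 1} w" using assms by auto
  then show "(\<lambda>x. indicator {- real i - 1..real i + 1} x * w x) \<in> borel_measurable lborel"
    unfolding set_integrable_def by (simp add: borel_measurable_integrable)
qed

lemma proj_cancel:
  assumes wm: "w \<in> borel_measurable lborel" and pos: "AE x in lborel. w x > 0"
    and fm: "f \<in> borel_measurable lborel"
  shows "proj 1 n (mult_op (\<lambda>t. complex_of_real (w t powi -1)) (mult_op (\<lambda>t. complex_of_real (w t powi 1)) f)) = proj 1 n f"
proof -
  have "fourier_coeff (mult_op (\<lambda>t. complex_of_real (w t powi -1)) (mult_op (\<lambda>t. complex_of_real (w t powi 1)) f)) k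
     = fourier_coeff f k" for k
    unfolding fourier_coeff_def mult_op_def
  proof (rule arg_cong[where f="\<lambda>x. x / _"], rule set_lebesgue_integral_cong_AE)
    show "AE x\<in>{0..2 * pi} in lborel.
       complex_of_real (w x powi - 1) * (complex_of_real (w x powi 1) * f x) * cis (- (of_int k * x)) =
       f x * cis (- (of_int k * x))"
      using pos by eventually_elim (simp add: power_int_minus field_simps)
  next
    have [measurable]: "(\<lambda>x. cis (- (of_int k * x))) \<in> borel_measurable lborel"
    proof -
      have "continuous_on UNIV (\<lambda>x. cis (- (of_int k * x)))"
        by (intro continuous_on_cis continuous_intros)
      then show ?thesis using borel_measurable_continuous_onI by simp
    qed
    note [measurable] = wm fm
    show "(\<lambda>x. complex_of_real (w x powi - 1) * (complex_of_real (w x powi 1) * f x) * cis (- (of_int k * x))) \<in> borel_measurable lborel"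
      by (simp add: power_int_minus) measurable
    show "(\<lambda>x. f x * cis (- (of_int k * x))) \<in> borel_measurable lborel" by measurable
  qed simp
  then show ?thesis by (simp add: proj_def)
qed



theorem lemma2p3:
  fixes w :: "real \<Rightarrow> real" and n :: nat and Phi :: "complex poly"
  assumes periodic: "\<forall>x. w (x + 2 * pi) = w x"
    and integrable: "set_integrable lborel {0..2*pi} w"
    and pos: "AE x in lborel. w x > 0"
    and bmo: "bmo_T w" and bmo_inv: "bmo_T (\<lambda>x. inverse (w x))"
    and n: "n \<ge> 1"
    and Phi: "is_monic_OP w n Phi"
  defines "Phis \<equiv> (\<lambda>t. poly (rev_star n Phi) (cis t))"
    and "W \<equiv> (\<lambda>(k::int) t. complex_of_real (w t powi k))"
  shows "\<forall>j::nat. j \<ge> 1 \<longrightarrow>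
      (AE t in lborel. mult_op (W (int j)) (proj 1 (int n) Phis) t =
          (\<Sum>l=1..j. of_nat ((j - 1) choose (l - 1)) *
              Cop (W 1) l n (mult_op (W (int j - int l)) Phis) t))
    \<and> (AE t in lborel. mult_op (W (- int j)) (proj 1 (int n) Phis) t =
          - (\<Sum>l=0..j. of_nat (j choose l) *
              Cop (W (-1)) (l + 1) n (mult_op (W (- (int j - int l))) (mult_op (W 1) Phis)) t))"
  
proof (intro allI impI conjI)
  fix j :: nat assume j: "j \<ge> 1"
  have wm: "w \<in> borel_measurable lborel" using bmo w_meas unfolding bmo_T_def by blast
  have deg: "degree Phi = n" using Phi by (simp add: is_monic_OP_def)
  have Phism: "Phis \<in> borel_measurable lborel"
  proof -
    have "continuous_on UNIV Phis" unfolding Phis_def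
      by (intro continuous_on_poly continuous_on_cis continuous_intros)
    then show ?thesis using borel_measurable_continuous_onI by simp
  qed
  have W1: "W 1 = (\<lambda>t. complex_of_real (w t))" by (simp add: W_def)
  have W0: "mult_op (W 0) f = f" for f by (simp add: W_def mult_op_def)
  have P0: "proj 1 (int n) (mult_op (W 1) Phis) = (\<lambda>t. 0)"
    unfolding proj_def W1 mult_op_def Phis_def using orth[OF Phi] by simp
  define h where "h i = mult_op (W (int i)) Phis" for i :: nat
  have hrec: "mult_op (W 1) (h i) = h (Suc i)" for i
  proof -
    have e: "w t powi 1 * w t powi int i = w t powi int (Suc i)" for t
      by (simp only: power_int_of_nat power_Suc power_int_1_right)
    show ?thesis unfolding h_def mult_op_def W_def
      by (rule ext) (simp only: mult.assoc[symmetric] of_real_mult[symmetric] e)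
  qed
  have h0: "h 0 = Phis" by (simp add: h_def W0)
  show "AE t in lborel. mult_op (W (int j)) (proj 1 (int n) Phis) t =
          (\<Sum>l=1..j. of_nat ((j - 1) choose (l - 1)) *
              Cop (W 1) l n (mult_op (W (int j - int l)) Phis) t)"
  proof (intro AE_I2)
    fix t
    define F where "F k i = Cop (W 1) (Suc k) n (h i) t" for k i
    have rec: "W 1 t * F k i = F (Suc k) i + F k (Suc i)" for k i
    proof -
      have "F (Suc k) i = mult_op (W 1) (Cop (W 1) (Suc k) n (h i)) t - F k (Suc i)"
        unfolding F_def hrec[symmetric] by (simp only: Cop.simps)
      then have "F (Suc k) i = W 1 t * F k i - F k (Suc i)"
        by (simp only: mult_op_def F_def[symmetric])
      then show ?thesis by simp
    qed
    have F00: "F 0 0 = W 1 t * proj 1 (int n) Phis t"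
      by (simp add: F_def h0 P0 P0[unfolded mult_op_def] mult_op_def)
    have "mult_op (W (int j)) (proj 1 (int n) Phis) t = W 1 t ^ (j - 1) * F 0 0"
    proof -
      obtain j' where j': "j = Suc j'" using j by (cases j) auto
      show ?thesis unfolding F00 W1 j' mult_op_def W_def
        by (simp only: power_int_of_nat diff_Suc_1 of_real_power power_Suc power_int_1_right of_real_mult mult.assoc mult.commute mult.left_commute)
    qed
    also have "\<dots> = (\<Sum>k\<le>j - 1. of_nat ((j - 1) choose k) * F k (j - 1 - k))"
      using binom_expand[of "W 1 t" F "j - 1" 0 0, OF rec] by (simp only: add_0)
    also have "\<dots> = (\<Sum>l=1..j. of_nat ((j - 1) choose (l - 1)) *
              Cop (W 1) l n (mult_op (W (int j - int l)) Phis) t)"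
    proof (rule sum.reindex_bij_witness[where i="\<lambda>l. l - 1" and j="\<lambda>k. Suc k"])
      fix k assume k: "k \<in> {..j - 1}"
      then have e1: "int j - int (Suc k) = int (j - 1 - k)" using j by auto
      show "of_nat ((j - 1) choose (Suc k - 1)) * Cop (W 1) (Suc k) n (mult_op (W (int j - int (Suc k))) Phis) t
          = of_nat ((j - 1) choose k) * F k (j - 1 - k)"
        unfolding F_def h_def e1 diff_Suc_1 ..
    qed (use j in auto)
    finally show "mult_op (W (int j)) (proj 1 (int n) Phis) t =
          (\<Sum>l=1..j. of_nat ((j - 1) choose (l - 1)) *
              Cop (W 1) l n (mult_op (W (int j - int l)) Phis) t)" .
  qed
next
  fix j :: nat assume j: "j \<ge> 1"
  have wm: "w \<in> borel_measurable lborel" using bmo w_meas unfolding bmo_T_def by blast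
  have Phism: "Phis \<in> borel_measurable lborel"
  proof -
    have "continuous_on UNIV Phis" unfolding Phis_def
      by (intro continuous_on_poly continuous_on_cis continuous_intros)
    then show ?thesis using borel_measurable_continuous_onI by simp
  qed
  have W1: "W 1 = (\<lambda>t. complex_of_real (w t))" by (simp add: W_def)
  have W0: "mult_op (W 0) f = f" for f by (simp add: W_def mult_op_def)
  have P0: "proj 1 (int n) (mult_op (W 1) Phis) = (\<lambda>t. 0)"
    unfolding proj_def W1 mult_op_def Phis_def using orth[OF Phi] by simp
  have canc: "proj 1 (int n) (mult_op (W (-1)) (mult_op (W 1) Phis)) = proj 1 (int n) Phis"
    unfolding W_def by (rule proj_cancel[OF wm pos Phism])
  define h where "h i = mult_op (W (- int i)) (mult_op (W 1) Phis)" for i :: nat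
  have hrec: "mult_op (W (-1)) (h i) = h (Suc i)" for i
  proof -
    have e: "w t powi (-1) * w t powi (- int i) = w t powi (- int (Suc i))" for t
      by (subst power_int_add[symmetric]) (auto simp: algebra_simps)
    show ?thesis unfolding h_def mult_op_def W_def
      by (rule ext) (simp only: mult.assoc[symmetric] of_real_mult[symmetric] e)
  qed
  have h0: "h 0 = mult_op (W 1) Phis" by (simp add: h_def W0)
  show "AE t in lborel. mult_op (W (- int j)) (proj 1 (int n) Phis) t =
          - (\<Sum>l=0..j. of_nat (j choose l) *
              Cop (W (-1)) (l + 1) n (mult_op (W (- (int j - int l))) (mult_op (W 1) Phis)) t)"
  proof (intro AE_I2)
    fix t
    define F where "F k i = Cop (W (-1)) (Suc k) n (h i) t" for k i
    have rec: "W (-1) t * F k i = F (Suc k) i + F k (Suc i)" for k i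
    proof -
      have "F (Suc k) i = mult_op (W (-1)) (Cop (W (-1)) (Suc k) n (h i)) t - F k (Suc i)"
        unfolding F_def hrec[symmetric] by (simp only: Cop.simps)
      then have "F (Suc k) i = W (-1) t * F k i - F k (Suc i)"
        by (simp only: mult_op_def F_def[symmetric])
      then show ?thesis by simp
    qed
    have F00: "F 0 0 = - proj 1 (int n) Phis t"
      using fun_cong[OF canc, of t] by (simp add: F_def h0 P0 P0[unfolded mult_op_def] mult_op_def)
    have pw: "w t powi (- int j) = (w t powi (-1)) ^ j"
      by (simp add: power_int_minus power_inverse)
    have "mult_op (W (- int j)) (proj 1 (int n) Phis) t = - (W (-1) t ^ j * F 0 0)"
      by (simp add: F00 W_def mult_op_def power_int_minus power_inverse)
    also have "W (-1) t ^ j * F 0 0 = (\<Sum>k\<le>j. of_nat (j choose k) * F k (j - k))"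
      using binom_expand[of "W (-1) t" F j 0 0, OF rec] by (simp only: add_0)
    also have "\<dots> = (\<Sum>l=0..j. of_nat (j choose l) *
              Cop (W (-1)) (l + 1) n (mult_op (W (- (int j - int l))) (mult_op (W 1) Phis)) t)"
      unfolding atLeast0AtMost
    proof (rule sum.cong)
      fix l assume l: "l \<in> {..j}"
      then have e1: "int (j - l) = int j - int l" by auto
      show "of_nat (j choose l) * F l (j - l) = of_nat (j choose l) *
              Cop (W (-1)) (l + 1) n (mult_op (W (- (int j - int l))) (mult_op (W 1) Phis)) t"
        unfolding F_def h_def e1 Suc_eq_plus1 ..
    qed simp
    finally show "mult_op (W (- int j)) (proj 1 (int n) Phis) t =
          - (\<Sum>l=0..j. of_nat (j choose l) *
              Cop (W (-1)) (l + 1) n (mult_op (W (- (int j - int l))) (mult_op (W 1) Phis)) t)" .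
  qed
qed

end
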